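(* For all integers $m,k\ge 0$, \begin{align*} \zeta(\bar 1,\{1\}_m,\bar 1,\bar 1,\{1\}_k)=&\frac{(-1)^k}{(m+1)!(k+1)!}\Big\{(k+1)(\ln 2)^{m+1}I(k)-(m+k+2)I(m+k+1)\Big\}\\ &-\sum_{i=1}^{m}\frac{(\ln 2)^i}{i!}\zeta(\bar 1,\{1\}_{m-i},\bar 1,\bar 1,\{1\}_k), \end{align*} where for integers $k\ge1$, $I(k):=\int_0^1\frac{\ln^k(1+x)\ln(1-x)}{1+x}\,dx$, and $I(0):=\frac{\ln^2(2)-\zeta(2)}{2}$.
   Context: For nonzero integers $s_1,\dots,s_k$, with $\operatorname{sgn}(s)=1$ if $s>0$ and $-1$ if $s<0$, the multiple zeta value is $\zeta(s_1,\dots,s_k)=\sum_{n_1>n_2>\cdots>n_k\ge 1}\prod_{j=1}^k n_j^{-|s_j|}\operatorname{sgn}(s_j)^{n_j}$. A barred entry $\bar p$ denotes the negative entry $-p$. The notation $\{1\}_d$ means the entry $1$ repeated $d$ times ($d=0$ means no entries). $\zeta(2)=\sum_{n\ge1}n^{-2}$. *)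

theory Defs
  imports "HOL-Analysis.Analysis"
begin

text \<open>Truncated alternating multiple zeta sum: sum over N >= n_1 > n_2 > ... > n_k >= 1
  of the product of sgn(s_j)^(n_j) / n_j^(abs s_j).\<close>
fun mzv_trunc :: "int list \<Rightarrow> nat \<Rightarrow> real" where
  "mzv_trunc [] N = 1"
| "mzv_trunc (s # ss) N =
     (\<Sum>n\<in>{1..N}. (real_of_int (sgn s)) ^ n / real n ^ nat \<bar>s\<bar> * mzv_trunc ss (n - 1))"

definition mzv :: "int list \<Rightarrow> real" where
  "mzv ss = lim (\<lambda>N. mzv_trunc ss N)"

definition zeta2 :: real where
  "zeta2 = (\<Sum>n. 1 / real (Suc n) ^ 2)"

definition Iint :: "nat \<Rightarrow> real" where
  "Iint k = (if k = 0 then (ln 2 ^ 2 - zeta2) / 2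
             else integral {0..1} (\<lambda>x::real. ln (1 + x) ^ k * ln (1 - x) / (1 + x)))"

end

theory Submission
  imports Defs
begin

definition cf :: "int \<Rightarrow> int list \<Rightarrow> nat \<Rightarrow> real" where
  "cf s r n = (if n = 0 then 0 else real_of_int (sgn s) ^ n / real n ^ nat \<bar>s\<bar> * mzv_trunc r (n-1))"

lemma trunc_cf: "mzv_trunc (s#r) N = (\<Sum>n<Suc N. cf s r n)"
proof (induction N)
  case 0 then show ?case by (simp add: cf_def)
next
  case (Suc N)
  have "mzv_trunc (s#r) (Suc N) = mzv_trunc (s#r) N + cf s r (Suc N)"
    by (simp add: cf_def)
  then show ?case using Suc by simp
qed

lemma trunc_bound:
  assumes "set ss \<subseteq> {1,-1}"
  shows "\<bar>mzv_trunc ss n\<bar> \<le> harm n ^ length ss"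
  using assms
proof (induction ss arbitrary: n)
  case Nil then show ?case by simp
next
  case (Cons s r)
  have s: "s = 1 \<or> s = -1" using Cons.prems by auto
  have IH: "\<And>j. \<bar>mzv_trunc r j\<bar> \<le> harm j ^ length r" using Cons by auto
  have "\<bar>mzv_trunc (s#r) n\<bar> \<le> (\<Sum>j\<in>{1..n}. \<bar>real_of_int (sgn s) ^ j / real j ^ nat \<bar>s\<bar> * mzv_trunc r (j - 1)\<bar>)"
    unfolding mzv_trunc.simps by (rule sum_abs)
  also have "\<dots> \<le> (\<Sum>j\<in>{1..n}. inverse (real j) * harm n ^ length r)"
  proof (rule sum_mono)
    fix j assume j: "j \<in> {1..n}"
    have b1: "\<bar>mzv_trunc r (j - 1)\<bar> \<le> harm n ^ length r"
      using IH[of "j-1"] harm_mono[of "j-1" n, where 'a=real] harm_nonneg[of "j-1", where 'a=real]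
      by (meson order_trans power_mono diff_le_self j atLeastAtMost_iff)
    have b2: "\<bar>real_of_int (sgn s) ^ j / real j ^ nat \<bar>s\<bar>\<bar> = inverse (real j)"
      using s by (auto simp: abs_mult power_abs divide_inverse)
    show "\<bar>real_of_int (sgn s) ^ j / real j ^ nat \<bar>s\<bar> * mzv_trunc r (j - 1)\<bar> \<le> inverse (real j) * harm n ^ length r"
    proof -
      have "\<bar>real_of_int (sgn s) ^ j / real j ^ nat \<bar>s\<bar> * mzv_trunc r (j - 1)\<bar>
          = inverse (real j) * \<bar>mzv_trunc r (j - 1)\<bar>"
        by (subst abs_mult) (use b2 in simp)
      then show ?thesis using b1 by (simp add: mult_left_mono)
    qed
  qed
  also have "\<dots> = harm n ^ length (s#r)"
    by (simp add: harm_def sum_distrib_right)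
  finally show ?case .
qed

lemma harm_le_ln: "harm n \<le> 1 + ln (real n + 1)"
proof -
  have "harm (Suc n) - ln (real (Suc n)) \<le> harm (Suc 0) - ln (real (Suc 0))"
    using decseq_harm_diff_ln unfolding decseq_def by (metis zero_le)
  moreover have "harm (Suc 0) = (1::real)" by (simp add: harm_def)
  moreover have "harm n \<le> (harm (Suc n)::real)" by (rule harm_mono) simp
  ultimately show ?thesis by (simp add: add.commute)
qed

lemma ln_pow_bound:
  assumes y: "y \<ge> 1"
  shows "(1 + ln y) ^ l \<le> (1 + 2 * real l) ^ l * sqrt y"
proof (cases "l = 0")
  case True then show ?thesis using y by simp
next
  case False
  define z where "z = y powr (1 / (2 * real l))"
  have z1: "z \<ge> 1" unfolding z_def using y False by (simp add: ge_one_powr_ge_zero)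
  have "ln z = ln y / (2 * real l)" unfolding z_def using y by (simp add: ln_powr)
  moreover have "ln z \<le> z - 1" using z1 by (intro ln_le_minus_one) simp
  then have "2 * real l * ln z \<le> 2 * real l * (z - 1)" by (intro mult_left_mono) auto
  ultimately have "ln y \<le> 2 * real l * (z - 1)" using False by (simp add: field_simps)
  then have h: "1 + ln y \<le> (1 + 2 * real l) * z" using z1 by (simp add: algebra_simps)
  have "0 \<le> 1 + ln y" using y by simp
  then have "(1 + ln y) ^ l \<le> ((1 + 2 * real l) * z) ^ l" using h by (intro power_mono)
  also have "\<dots> = (1 + 2 * real l) ^ l * z ^ l" by (simp add: power_mult_distrib)
  also have "z ^ l = y powr (1/2)" unfolding z_def using y False
    by (simp add: powr_realpow [symmetric] powr_powr)
  also have "\<dots> = sqrt y" using y by (simp add: powr_half_sqrt)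
  finally show ?thesis .
qed

lemma trunc_bound2:
  assumes "set ss \<subseteq> {1,-1}"
  shows "\<bar>mzv_trunc ss n\<bar> \<le> (1 + 2 * real (length ss)) ^ length ss * sqrt (real n + 1)"
proof -
  have "\<bar>mzv_trunc ss n\<bar> \<le> harm n ^ length ss" by (rule trunc_bound[OF assms])
  also have "\<dots> \<le> (1 + ln (real n + 1)) ^ length ss"
    by (intro power_mono harm_le_ln harm_nonneg)
  also have "\<dots> \<le> (1 + 2 * real (length ss)) ^ length ss * sqrt (real n + 1)"
    by (rule ln_pow_bound) simp
  finally show ?thesis .
qed

lemma abel_key:
  fixes a :: "nat \<Rightarrow> real" and x :: real
  assumes x: "0 \<le> x" "x < 1" and B: "\<And>N. \<bar>(\<Sum>n<Suc N. a n) - A\<bar> \<le> B"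
  shows "(\<lambda>n. a n * x ^ n) sums ((1 - x) * (\<Sum>N. ((\<Sum>n<Suc N. a n) - A) * x ^ N) + A)"
proof -
  define s where "s N = (\<Sum>n<Suc N. a n) - A" for N
  define t where "t N = (\<Sum>n<Suc N. a n)" for N
  have sx: "summable (\<lambda>N. s N * x ^ N)"
  proof (rule summable_comparison_test')
    show "summable (\<lambda>N. B * x ^ N)" using x by (intro summable_mult summable_geometric) simp
    fix N :: nat assume "N \<ge> 0"
    show "norm (s N * x ^ N) \<le> B * x ^ N"
      using B[of N] x by (simp add: s_def abs_mult mult_right_mono)
  qed
  define S where "S = (\<Sum>N. s N * x ^ N)"
  have gs: "(\<lambda>N. x ^ N) sums (1 / (1 - x))" using x by (intro geometric_sums) simp
  have t1: "(\<lambda>N. t N * x ^ N) sums (S + A * (1 / (1 - x)))"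
  proof -
    have "(\<lambda>N. s N * x ^ N + A * x ^ N) sums (S + A * (1 / (1 - x)))"
      using sx gs unfolding S_def by (intro sums_add sums_mult) (auto simp: summable_sums)
    then show ?thesis by (simp add: s_def t_def algebra_simps)
  qed
  define f where "f N = (if N = 0 then 0 else t (N - 1) * x ^ N)" for N
  have "(\<lambda>N. f (Suc N)) sums (x * (S + A * (1 / (1 - x))))"
    using sums_mult[OF t1, of x] by (simp add: f_def algebra_simps)
  then have t2: "f sums (x * (S + A * (1 / (1 - x))))"
    by (subst (asm) sums_Suc_iff) (simp add: f_def)
  have "(\<lambda>N. t N * x ^ N - f N) sums ((S + A * (1 / (1 - x))) - x * (S + A * (1 / (1 - x))))"
    by (rule sums_diff[OF t1 t2])
  have funeq: "(\<lambda>N. t N * x ^ N - f N) = (\<lambda>n. a n * x ^ n)"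
  proof
    fix N show "t N * x ^ N - f N = a N * x ^ N"
      by (cases N) (simp_all add: t_def f_def algebra_simps)
  qed
  have "(S + A * (1 / (1 - x))) - x * (S + A * (1 / (1 - x))) = (1 - x) * (S + A * (1 / (1 - x)))"
    by (simp only: left_diff_distrib mult_1_left)
  also have "\<dots> = (1 - x) * S + A"
  proof -
    have h: "(1 - x) * (A * (1 / (1 - x))) = A" using x by simp
    show ?thesis by (simp only: distrib_left h)
  qed
  finally have Veq: "(S + A * (1 / (1 - x))) - x * (S + A * (1 / (1 - x))) = (1 - x) * S + A" .
  have d: "(\<lambda>N. t N * x ^ N - f N) sums ((1 - x) * S + A)"
    using sums_diff[OF t1 t2] by (simp only: Veq)
  show ?thesis using d unfolding funeq S_def s_def by assumption
qed

lemma abel_thm: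
  fixes a :: "nat \<Rightarrow> real"
  assumes lim: "(\<lambda>N. \<Sum>n<N. a n) \<longlonglongrightarrow> A"
  shows "((\<lambda>x. \<Sum>n. a n * x ^ n) \<longlongrightarrow> A) (at_left 1)"
proof -
  define s where "s N = (\<Sum>n<Suc N. a n) - A" for N
  have "(\<lambda>N. (\<Sum>n<Suc N. a n) - A) \<longlonglongrightarrow> A - A"
    by (intro tendsto_diff tendsto_const LIMSEQ_Suc[OF lim])
  then have s0: "s \<longlonglongrightarrow> 0" unfolding s_def[abs_def] by simp
  then obtain B where B: "\<And>N. \<bar>s N\<bar> \<le> B"
    using convergent_imp_Bseq[of s] unfolding convergent_def Bseq_def by fastforce
  show ?thesis
  proof (rule tendstoI)
    fix e :: real assume e: "e > 0"
    from s0 e obtain N0 where N0: "\<And>N. N \<ge> N0 \<Longrightarrow> \<bar>s N\<bar> < e / 2"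
      unfolding LIMSEQ_def by (metis dist_real_def diff_zero half_gt_zero)
    define M where "M = (\<Sum>N<N0. \<bar>s N\<bar>)"
    have M0: "M \<ge> 0" unfolding M_def by (simp add: sum_nonneg)
    have "eventually (\<lambda>x. x \<in> {max 0 (1 - e / (2 * (M + 1)))<..<1}) (at_left (1::real))"
      using e M0 by (intro eventually_at_left_real) (simp add: field_simps)
    then show "eventually (\<lambda>x. dist (\<Sum>n. a n * x ^ n) A < e) (at_left 1)"
    proof (rule eventually_mono)
      fix x :: real assume "x \<in> {max 0 (1 - e / (2 * (M + 1)))<..<1}"
      then have x: "0 < x" "x < 1" and x2: "(1 - x) * (M + 1) < e / 2"
        using M0 by (auto simp: field_simps)
      have sx: "summable (\<lambda>N. \<bar>s N\<bar> * x ^ N)"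
      proof (rule summable_comparison_test')
        show "summable (\<lambda>N. B * x ^ N)" using x by (intro summable_mult summable_geometric) simp
        fix N :: nat assume "N \<ge> 0"
        show "norm (\<bar>s N\<bar> * x ^ N) \<le> B * x ^ N"
          using B[of N] x by (simp add: abs_mult mult_right_mono)
      qed
      have sx': "summable (\<lambda>N. s N * x ^ N)"
        by (rule summable_comparison_test'[OF sx]) (use x in \<open>simp add: abs_mult\<close>)
      have eq: "(\<Sum>n. a n * x ^ n) = (1 - x) * (\<Sum>N. s N * x ^ N) + A"
        using sums_unique[OF abel_key[of x a A B]] x B by (simp add: s_def)
      have g: "(\<lambda>N. (e/2) * x ^ N) sums ((e/2) * (1 / (1 - x)))"
        using x by (intro sums_mult geometric_sums) simp
      have fin: "(\<lambda>N. if N < N0 then \<bar>s N\<bar> else 0) sums M"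
      proof -
        have "(\<lambda>N. if N < N0 then \<bar>s N\<bar> else 0) sums (\<Sum>N<N0. (if N < N0 then \<bar>s N\<bar> else 0))"
          by (rule sums_finite) auto
        then show ?thesis unfolding M_def by simp
      qed
      have "\<bar>\<Sum>N. s N * x ^ N\<bar> \<le> (\<Sum>N. \<bar>s N\<bar> * x ^ N)"
      proof -
        have eqa: "(\<lambda>N. \<bar>s N * x ^ N\<bar>) = (\<lambda>N. \<bar>s N\<bar> * x ^ N)" using x by (simp add: abs_mult)
        show ?thesis using summable_rabs[of "\<lambda>N. s N * x ^ N"] sx unfolding eqa by simp
      qed
      also have "\<dots> \<le> (\<Sum>N. (if N < N0 then \<bar>s N\<bar> else 0) + (e/2) * x ^ N)"
      proof (rule suminf_le)
        fix N
        show "\<bar>s N\<bar> * x ^ N \<le> (if N < N0 then \<bar>s N\<bar> else 0) + e / 2 * x ^ N"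
        proof (cases "N < N0")
          case True
          have "\<bar>s N\<bar> * x ^ N \<le> \<bar>s N\<bar> * 1" using x by (intro mult_left_mono power_le_one) auto
          moreover have "0 \<le> e / 2 * x ^ N" using e x by simp
          ultimately show ?thesis using True by simp
        next
          case False
          then have "\<bar>s N\<bar> \<le> e / 2" using N0[of N] by simp
          then show ?thesis using False x by (simp add: mult_right_mono)
        qed
      qed (use sx sums_summable[OF sums_add[OF fin g]] in auto)
      also have "\<dots> = M + (e/2) * (1 / (1 - x))" by (rule sums_unique[OF sums_add[OF fin g], symmetric])
      finally have "\<bar>\<Sum>N. s N * x ^ N\<bar> \<le> M + (e/2) * (1 / (1 - x))" .
      then have "(1 - x) * \<bar>\<Sum>N. s N * x ^ N\<bar> \<le> (1 - x) * (M + (e/2) * (1 / (1 - x)))"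
        using x by (intro mult_left_mono) auto
      also have "\<dots> = (1 - x) * M + e / 2" using x by (simp add: field_simps)
      also have "\<dots> < e" using x2 x by (simp add: field_simps)
      finally show "dist (\<Sum>n. a n * x ^ n) A < e"
        using x by (simp add: eq dist_real_def abs_mult)
    qed
  qed
qed

lemma seq_even_odd:
  fixes f :: "nat \<Rightarrow> real"
  assumes e: "(\<lambda>n. f (2*n)) \<longlonglongrightarrow> l" and o: "(\<lambda>n. f (2*n+1)) \<longlonglongrightarrow> l"
  shows "f \<longlonglongrightarrow> l"
proof (rule LIMSEQ_I)
  fix r :: real assume r: "r > 0"
  obtain N1 where N1: "\<And>n. n \<ge> N1 \<Longrightarrow> norm (f (2*n) - l) < r" using LIMSEQ_D[OF e r] by blast
  obtain N2 where N2: "\<And>n. n \<ge> N2 \<Longrightarrow> norm (f (2*n+1) - l) < r" using LIMSEQ_D[OF o r] by blast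
  show "\<exists>no. \<forall>n\<ge>no. norm (f n - l) < r"
  proof (intro exI allI impI)
    fix n assume n: "n \<ge> 2 * (N1 + N2)"
    show "norm (f n - l) < r"
    proof (cases "even n")
      case True then obtain k where "n = 2 * k" by auto
      then show ?thesis using N1[of k] n by auto
    next
      case False then obtain k where "n = 2 * k + 1" using oddE by blast
      then show ?thesis using N2[of k] n by auto
    qed
  qed
qed

lemma trunc_diff_bound:
  assumes "set r \<subseteq> {1,-1}"
  shows "\<exists>D\<ge>0. \<forall>n\<ge>1. \<bar>mzv_trunc r n - mzv_trunc r (n-1)\<bar> \<le> D / sqrt (real n)"
proof (cases r)
  case Nil then show ?thesis by (intro exI[of _ 0]) auto
next
  case (Cons s r')
  have s: "s = 1 \<or> s = -1" and r': "set r' \<subseteq> {1,-1}" using assms Cons by auto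
  define C where "C = (1 + 2 * real (length r')) ^ length r'"
  have C0: "C \<ge> 0" unfolding C_def by simp
  show ?thesis
  proof (intro exI[of _ C] conjI allI impI C0)
    fix n :: nat assume n: "n \<ge> 1"
    then obtain m where m: "n = Suc m" by (cases n) auto
    have "mzv_trunc r n - mzv_trunc r (n-1) = cf s r' n"
      using m Cons by (simp add: cf_def)
    also have "\<bar>\<dots>\<bar> = \<bar>mzv_trunc r' m\<bar> / real n"
      using s m by (auto simp: cf_def abs_mult power_abs)
    also have "\<dots> \<le> C * sqrt (real n) / real n"
      using trunc_bound2[OF r', of m] m by (intro divide_right_mono) (simp_all add: C_def add.commute)
    also have "\<dots> = C / sqrt (real n)"
      using n by (simp add: field_simps real_sqrt_divide del: real_sqrt_le_0_iff)
    finally show "\<bar>mzv_trunc r n - mzv_trunc r (n-1)\<bar> \<le> C / sqrt (real n)" .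
  qed
qed

lemma summable_w: "summable (\<lambda>j::nat. 1 / (sqrt (2 * real j + 1) * (2 * real j + 2)))"
proof (rule summable_comparison_test')
  have "summable (\<lambda>n::nat. real n powr (-3/2))" by (simp add: summable_real_powr_iff)
  then show "summable (\<lambda>j::nat. real (Suc j) powr (-3/2))" by (subst summable_Suc_iff)
  fix j :: nat assume "j \<ge> 0"
  have e: "real (Suc j) powr (-3/2) = 1 / (real (Suc j) * sqrt (real (Suc j)))"
  proof -
    have "real (Suc j) powr (3/2) = real (Suc j) powr (1 + 1/2)" by simp
    also have "\<dots> = real (Suc j) * sqrt (real (Suc j))"
      by (subst powr_add) (simp add: powr_half_sqrt)
    finally have h: "real (Suc j) powr (3/2) = real (Suc j) * sqrt (real (Suc j))" .
    have "real (Suc j) powr (-(3/2)) = 1 / real (Suc j) powr (3/2)" by (rule powr_minus_divide)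
    then show ?thesis unfolding h by simp
  qed
  have a: "sqrt (real (Suc j)) \<le> sqrt (2 * real j + 1)" by simp
  have b: "real (Suc j) \<le> 2 * real j + 2" by simp
  have "real (Suc j) * sqrt (real (Suc j)) \<le> sqrt (2 * real j + 1) * (2 * real j + 2)"
    using mult_mono[OF b a] by (simp add: mult.commute)
  moreover have "0 < real (Suc j) * sqrt (real (Suc j))" by simp
  ultimately have "1 / (sqrt (2 * real j + 1) * (2 * real j + 2)) \<le> 1 / (real (Suc j) * sqrt (real (Suc j)))"
    by (intro divide_left_mono) auto
  then show "norm (1 / (sqrt (2 * real j + 1) * (2 * real j + 2))) \<le> real (Suc j) powr (-3/2)"
    unfolding e by simp
qed

lemma trunc_conv:
  assumes r: "set r \<subseteq> {1,-1}"
  shows "convergent (\<lambda>N. \<Sum>n<N. cf (-1) r n)"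
proof -
  define T where "T = mzv_trunc r"
  define C where "C = (1 + 2 * real (length r)) ^ length r"
  have TC: "\<And>n. \<bar>T n\<bar> \<le> C * sqrt (real n + 1)" unfolding T_def C_def by (rule trunc_bound2[OF r])
  have C0: "C \<ge> 0" unfolding C_def by simp
  obtain D where D0: "D \<ge> 0" and D: "\<And>n. n \<ge> 1 \<Longrightarrow> \<bar>T n - T (n-1)\<bar> \<le> D / sqrt (real n)"
    using trunc_diff_bound[OF r] unfolding T_def by blast
  define a where "a = cf (-1) r"
  have a_odd: "a (2*j+1) = - T (2*j) / (2 * real j + 1)" for j
    by (simp add: a_def cf_def T_def)
  have a_even: "a (2*j+2) = T (2*j+1) / (2 * real j + 2)" for j
    by (simp add: a_def cf_def T_def)
  define p where "p j = a (2*j+1) + a (2*j+2)" for j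
  define w where "w j = 1 / (sqrt (2 * real j + 1) * (2 * real j + 2))" for j
  have pb: "\<bar>p j\<bar> \<le> (C + D) * w j" for j
  proof -
    have sq: "sqrt (2 * real j + 1) / (2 * real j + 1) = 1 / sqrt (2 * real j + 1)"
    proof -
      have "0 < sqrt (2 * real j + 1)" by simp
      moreover have "sqrt (2 * real j + 1) * sqrt (2 * real j + 1) = 2 * real j + 1" by simp
      ultimately show ?thesis by (simp add: divide_simps)
    qed
    have p_eq: "p j = (T (2*j+1) - T (2*j)) / (2 * real j + 2) - T (2*j) / ((2 * real j + 1) * (2 * real j + 2))"
    proof -
      have gen: "\<And>T0 T1 y::real. y > 0 \<Longrightarrow> - T0 / y + T1 / (y + 1) = (T1 - T0) / (y + 1) - T0 / (y * (y + 1))"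
      proof -
        fix T0 T1 y :: real assume y: "y > 0"
        have "y + 1 > 0" using y by simp
        then show "- T0 / y + T1 / (y + 1) = (T1 - T0) / (y + 1) - T0 / (y * (y + 1))"
          using y by (simp add: divide_simps) (simp add: algebra_simps)
      qed
      have "p j = - T (2*j) / (2 * real j + 1) + T (2*j+1) / ((2 * real j + 1) + 1)"
        unfolding p_def a_odd a_even by (simp add: add.assoc)
      also have "\<dots> = (T (2*j+1) - T (2*j)) / ((2 * real j + 1) + 1) - T (2*j) / ((2 * real j + 1) * ((2 * real j + 1) + 1))"
        by (rule gen) simp
      finally show ?thesis by (simp add: add.assoc)
    qed
    have d1: "\<bar>T (2*j+1) - T (2*j)\<bar> \<le> D / sqrt (2 * real j + 1)"
      using D[of "2*j+1"] by (simp add: add.commute)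
    have d2: "\<bar>T (2*j)\<bar> \<le> C * sqrt (2 * real j + 1)"
      using TC[of "2*j"] by simp
    have "\<bar>p j\<bar> \<le> \<bar>T (2*j+1) - T (2*j)\<bar> / (2 * real j + 2) + \<bar>T (2*j)\<bar> / ((2 * real j + 1) * (2 * real j + 2))"
      unfolding p_eq by (rule order_trans[OF abs_triangle_ineq4]) (simp add: abs_divide abs_mult)
    also have "\<dots> \<le> D / sqrt (2 * real j + 1) / (2 * real j + 2) + C * sqrt (2 * real j + 1) / ((2 * real j + 1) * (2 * real j + 2))"
      by (intro add_mono divide_right_mono d1 d2) auto
    also have "C * sqrt (2 * real j + 1) / ((2 * real j + 1) * (2 * real j + 2)) = C * (sqrt (2 * real j + 1) / (2 * real j + 1)) / (2 * real j + 2)"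
      by simp
    also have "\<dots> = C / sqrt (2 * real j + 1) / (2 * real j + 2)" unfolding sq by simp
    also have "D / sqrt (2 * real j + 1) / (2 * real j + 2) + C / sqrt (2 * real j + 1) / (2 * real j + 2) = (C + D) * w j"
      unfolding w_def by (simp add: divide_divide_eq_left add_divide_distrib[symmetric] add.commute)
    finally show ?thesis .
  qed
  have sp: "summable p"
  proof (rule summable_comparison_test')
    show "summable (\<lambda>j. (C + D) * w j)" unfolding w_def by (intro summable_mult summable_w)
    fix j :: nat assume "j \<ge> 0" then show "norm (p j) \<le> (C + D) * w j" using pb by simp
  qed
  define P where "P N = (\<Sum>n<N. a n)" for N
  have Podd: "P (2*J+1) = (\<Sum>j<J. p j)" for J
  proof (induction J)
    case 0 then show ?case by (simp add: P_def a_def cf_def)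
  next
    case (Suc J)
    have "P (2*Suc J+1) = P (2*J+1) + a (2*J+1) + a (2*J+2)"
      by (simp add: P_def)
    then show ?case using Suc by (simp add: p_def)
  qed
  have l1: "(\<lambda>J. P (2*J+1)) \<longlonglongrightarrow> suminf p"
    unfolding Podd using summable_LIMSEQ[OF sp] .
  have a0: "(\<lambda>J. a (2*J+1)) \<longlonglongrightarrow> 0"
  proof (rule Lim_null_comparison)
    show "\<forall>\<^sub>F J in sequentially. norm (a (2*J+1)) \<le> C / sqrt (2 * real J + 1)"
    proof (rule always_eventually, rule allI)
      fix J :: nat
      have sq: "sqrt (2 * real J + 1) / (2 * real J + 1) = 1 / sqrt (2 * real J + 1)"
      proof -
        have "0 < sqrt (2 * real J + 1)" by simp
        moreover have "sqrt (2 * real J + 1) * sqrt (2 * real J + 1) = 2 * real J + 1" by simp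
        ultimately show ?thesis by (simp add: divide_simps)
      qed
      have "norm (a (2*J+1)) = \<bar>T (2*J)\<bar> / (2 * real J + 1)" unfolding a_odd by (simp add: abs_divide)
      also have "\<dots> \<le> C * sqrt (2 * real J + 1) / (2 * real J + 1)"
        using TC[of "2*J"] by (intro divide_right_mono) auto
      also have "\<dots> = C * (sqrt (2 * real J + 1) / (2 * real J + 1))" by simp
      also have "\<dots> = C / sqrt (2 * real J + 1)" unfolding sq by simp
      finally show "norm (a (2*J+1)) \<le> C / sqrt (2 * real J + 1)" .
    qed
    show "(\<lambda>J. C / sqrt (2 * real J + 1)) \<longlonglongrightarrow> 0" by real_asymp
  qed
  have l2: "(\<lambda>J. P (2*J+2)) \<longlonglongrightarrow> suminf p + 0"
  proof -
    have "(\<lambda>J. P (2*J+1) + a (2*J+1)) \<longlonglongrightarrow> suminf p + 0" by (intro tendsto_add l1 a0)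
    moreover have "P (2*J+2) = P (2*J+1) + a (2*J+1)" for J by (simp add: P_def)
    ultimately show ?thesis by simp
  qed
  have "P \<longlonglongrightarrow> suminf p"
  proof (rule seq_even_odd)
    show "(\<lambda>n. P (2 * n + 1)) \<longlonglongrightarrow> suminf p" using l1 .
    have "(\<lambda>n. P (2 * Suc n)) \<longlonglongrightarrow> suminf p" using l2 by simp
    then show "(\<lambda>n. P (2 * n)) \<longlonglongrightarrow> suminf p" by (rule LIMSEQ_imp_Suc)
  qed
  then show ?thesis unfolding P_def a_def convergent_def by blast
qed

definition ser :: "int \<Rightarrow> int list \<Rightarrow> real \<Rightarrow> real" where
  "ser s r x = (\<Sum>n. cf s r n * x ^ n)"

lemma summable_nx: "\<bar>x::real\<bar> < 1 \<Longrightarrow> summable (\<lambda>n. real (Suc n) * \<bar>x\<bar> ^ n)"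
proof -
  assume x: "\<bar>x\<bar> < 1"
  have "summable (\<lambda>n. diffs (\<lambda>_. 1::real) n * \<bar>x\<bar> ^ n)"
    by (rule termdiff_converges[where K=1]) (use x in \<open>auto intro!: summable_geometric\<close>)
  then show ?thesis by (simp add: diffs_def)
qed

lemma ser_summable:
  assumes s: "s \<in> {1,-1}" and r: "set r \<subseteq> {1,-1}" and x: "\<bar>x\<bar> < 1"
  shows "summable (\<lambda>n. cf s r n * x ^ n)"
proof (rule summable_comparison_test')
  define C where "C = (1 + 2 * real (length r)) ^ length r"
  show "summable (\<lambda>n. C * (real (Suc n) * \<bar>x\<bar> ^ n))" by (intro summable_mult summable_nx x)
  fix n :: nat assume "n \<ge> 0"
  have "\<bar>cf s r n\<bar> \<le> C * real (Suc n)"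
  proof (cases n)
    case 0 then show ?thesis by (simp add: cf_def C_def)
  next
    case (Suc m)
    have "\<bar>cf s r n\<bar> = \<bar>mzv_trunc r m\<bar> / real n" using s Suc by (auto simp: cf_def abs_mult power_abs)
    also have "\<dots> \<le> \<bar>mzv_trunc r m\<bar>" using Suc by (simp add: divide_le_eq mult_le_cancel_left1)
    also have "\<dots> \<le> C * sqrt (real m + 1)" unfolding C_def by (rule trunc_bound2[OF r])
    also have "\<dots> \<le> C * real (Suc n)"
    proof (intro mult_left_mono)
      have "real m + 1 \<le> (real m + 1)^2" by (simp add: power2_eq_square)
      then have "sqrt (real m + 1) \<le> sqrt ((real m + 1)^2)" by (rule real_sqrt_le_mono)
      then have "sqrt (real m + 1) \<le> real m + 1" by simp
      then show "sqrt (real m + 1) \<le> real (Suc n)" using Suc by simp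
    qed (simp add: C_def)
    finally show ?thesis .
  qed
  then show "norm (cf s r n * x ^ n) \<le> C * (real (Suc n) * \<bar>x\<bar> ^ n)"
    using mult_right_mono[of "\<bar>cf s r n\<bar>" "C * real (Suc n)" "\<bar>x\<bar> ^ n"] by (simp add: abs_mult power_abs mult.assoc)
qed

lemma ser_deriv:
  assumes s: "s \<in> {1,-1}" and r: "set r \<subseteq> {1,-1}" and x: "\<bar>x\<bar> < 1"
  shows "(ser s r has_field_derivative (\<Sum>n. real_of_int s ^ Suc n * mzv_trunc r n * x ^ n)) (at x)"
proof -
  have "((\<lambda>x. \<Sum>n. cf s r n * x ^ n) has_field_derivative (\<Sum>n. diffs (cf s r) n * x^n)) (at x)"
    by (rule termdiffs_strong'[where K=1]) (use ser_summable[OF s r] x in auto)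
  moreover have "diffs (cf s r) n = real_of_int s ^ Suc n * mzv_trunc r n" for n
    using s by (auto simp: diffs_def cf_def)
  ultimately show ?thesis unfolding ser_def[abs_def] by simp
qed

lemma ser_deriv_summable:
  assumes s: "s \<in> {1,-1}" and r: "set r \<subseteq> {1,-1}" and x: "\<bar>x\<bar> < 1"
  shows "summable (\<lambda>n. real_of_int s ^ Suc n * mzv_trunc r n * x ^ n)"
proof -
  have "summable (\<lambda>n. diffs (cf s r) n * x^n)"
    by (rule termdiff_converges[where K=1]) (use ser_summable[OF s r] x in auto)
  moreover have "diffs (cf s r) n = real_of_int s ^ Suc n * mzv_trunc r n" for n
    using s by (auto simp: diffs_def cf_def)
  ultimately show ?thesis by simp
qed

lemma ser_deriv_nil:
  assumes s: "s \<in> {1,-1}" and x: "\<bar>x\<bar> < 1"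
  shows "(ser s [] has_field_derivative (real_of_int s / (1 - real_of_int s * x))) (at x)"
proof -
  have sx: "norm (real_of_int s * x) < 1" using s x by (auto simp: abs_mult)
  have "(\<Sum>n. real_of_int s ^ Suc n * mzv_trunc [] n * x ^ n) = (\<Sum>n. real_of_int s * (real_of_int s * x) ^ n)"
    by (simp add: power_mult_distrib mult.assoc)
  also have "\<dots> = real_of_int s * (1 / (1 - real_of_int s * x))"
    using suminf_mult[OF summable_geometric[OF sx], of "real_of_int s"] suminf_geometric[OF sx] by simp
  finally show ?thesis using ser_deriv[OF s _ x, of "[]"] by simp
qed

lemma ser_deriv_cons:
  assumes s: "s \<in> {1,-1}" and t: "t \<in> {1,-1}" and rr: "set rr \<subseteq> {1,-1}" and x: "\<bar>x\<bar> < 1"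
  shows "(ser s (t#rr) has_field_derivative
           (real_of_int s / (1 - real_of_int s * x) * ser (s*t) rr x)) (at x)"
proof -
  define T where "T = mzv_trunc (t#rr)"
  define y where "y = real_of_int s * x"
  have y1: "\<bar>y\<bar> < 1" using s x by (auto simp: y_def)
  have ss: "real_of_int s * real_of_int s = 1" using s by auto
  have r: "set (t#rr) \<subseteq> {1,-1}" using t rr by auto
  have eqt: "real_of_int s ^ Suc n * T n * x ^ n = real_of_int s * (T n * y ^ n)" for n
    by (simp add: y_def power_mult_distrib algebra_simps)
  have sumT: "summable (\<lambda>n. T n * y ^ n)"
  proof -
    have "summable (\<lambda>n. real_of_int s * (real_of_int s ^ Suc n * T n * x ^ n))"
      by (intro summable_mult) (use ser_deriv_summable[OF s r x] in \<open>simp add: T_def\<close>)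
    moreover have fe: "(\<lambda>n. real_of_int s * (real_of_int s ^ Suc n * T n * x ^ n)) = (\<lambda>n. T n * y ^ n)"
    proof (rule ext)
      fix n show "real_of_int s * (real_of_int s ^ Suc n * T n * x ^ n) = T n * y ^ n"
        unfolding eqt by (simp add: mult.assoc[symmetric] ss)
    qed
    ultimately show ?thesis by (simp only: fe)
  qed
  define Q where "Q = (\<Sum>n. T n * y ^ n)"
  have t1: "(\<lambda>n. T n * y ^ n) sums Q" using sumT unfolding Q_def by (simp add: summable_sums)
  define f where "f N = (if N = 0 then 0 else T (N - 1) * y ^ N)" for N
  have "(\<lambda>N. f (Suc N)) sums (y * Q)"
    using sums_mult[OF t1, of y] by (simp add: f_def algebra_simps)
  then have t2: "f sums (y * Q)"
    by (subst (asm) sums_Suc_iff) (simp add: f_def)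
  have d: "(\<lambda>N. T N * y ^ N - f N) sums (Q - y * Q)" by (rule sums_diff[OF t1 t2])
  have feq: "T N * y ^ N - f N = cf (s*t) rr N * x ^ N" for N
  proof (cases N)
    case 0 then show ?thesis by (simp add: T_def f_def cf_def)
  next
    case (Suc M)
    have "T (Suc M) - T M = cf t rr (Suc M)" unfolding T_def by (simp add: cf_def)
    moreover have "sgn (s * t) = s * t" "nat \<bar>s * t\<bar> = 1" "sgn t = t" "nat \<bar>t\<bar> = 1"
      using s t by auto
    ultimately show ?thesis using Suc
      by (simp add: f_def cf_def y_def power_mult_distrib algebra_simps)
  qed
  have "ser (s*t) rr x = Q - y * Q"
    using sums_unique[OF d] unfolding feq ser_def by simp
  then have Qeq: "Q = ser (s*t) rr x / (1 - y)" using y1 by (simp add: field_simps)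
  have "(\<Sum>n. real_of_int s ^ Suc n * T n * x ^ n) = real_of_int s * Q"
    unfolding eqt Q_def by (rule suminf_mult[OF sumT])
  then show ?thesis using ser_deriv[OF s r x] unfolding T_def[symmetric] Qeq y_def by simp
qed

definition J :: "nat \<Rightarrow> real \<Rightarrow> real" where
  "J n x = integral {0..x} (\<lambda>x::real. ln (1 + x) ^ n * ln (1 - x) / (1 + x))"

lemma deriv_eqI: "(f has_real_derivative a) F \<Longrightarrow> a = b \<Longrightarrow> (f has_real_derivative b) F"
  by simp

lemma uniq0:
  fixes f g d :: "real \<Rightarrow> real"
  assumes x: "0 \<le> x" "x < 1" and f0: "f 0 = g 0"
    and cf: "continuous_on {0..x} f" and cg: "continuous_on {0..x} g"
    and df: "\<And>t. 0 < t \<Longrightarrow> t < 1 \<Longrightarrow> (f has_real_derivative d t) (at t)"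
    and dg: "\<And>t. 0 < t \<Longrightarrow> t < 1 \<Longrightarrow> (g has_real_derivative d t) (at t)"
  shows "f x = g x"
proof (cases "x = 0")
  case True then show ?thesis using f0 by simp
next
  case False
  then have "0 < x" using x by simp
  have "(\<lambda>t. f t - g t) x = (\<lambda>t. f t - g t) 0"
  proof (rule DERIV_isconst_end[OF \<open>0 < x\<close>])
    show "continuous_on {0..x} (\<lambda>t. f t - g t)" by (intro continuous_intros cf cg)
    fix t assume "0 < t" "t < x"
    then show "((\<lambda>t. f t - g t) has_real_derivative 0) (at t)"
      using DERIV_diff[OF df dg, of t] x by simp
  qed
  then show ?thesis using f0 by simp
qed

lemma ser_cont:
  assumes s: "s \<in> {1,-1}" and r: "set r \<subseteq> {1,-1}" and x: "0 \<le> x" "x < 1"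
  shows "continuous_on {0..x} (ser s r)"
proof (rule continuous_at_imp_continuous_on, rule ballI)
  fix t assume "t \<in> {0..x}"
  then have "\<bar>t\<bar> < 1" using x by auto
  then show "isCont (ser s r) t" using ser_deriv[OF s r] DERIV_isCont by blast
qed

lemma ser_at0: "ser s r 0 = 0"
  unfolding ser_def using powser_sums_zero[of "cf s r"] by (simp add: sums_iff cf_def)

lemma integrand_cont:
  assumes "b < 1"
  shows "continuous_on {0..b} (\<lambda>x::real. ln (1 + x) ^ n * ln (1 - x) / (1 + x))"
  using assms by (intro continuous_intros) auto

lemma J_cont:
  assumes "x < 1"
  shows "continuous_on {0..x} (J n)"
  unfolding J_def[abs_def]
  by (rule indefinite_integral_continuous_1, rule integrable_continuous_real, rule integrand_cont[OF assms])

lemma J_deriv: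
  assumes "0 < t" "t < 1"
  shows "(J n has_real_derivative (ln (1 + t) ^ n * ln (1 - t) / (1 + t))) (at t)"
proof -
  define b where "b = (1 + t) / 2"
  have b: "t < b" "b < 1" using assms by (auto simp: b_def)
  have "(J n has_real_derivative (ln (1 + t) ^ n * ln (1 - t) / (1 + t))) (at t within {0..b})"
    unfolding J_def[abs_def] by (rule integral_has_real_derivative[OF integrand_cont[OF b(2)]]) (use assms b in auto)
  moreover have "at t within {0..b} = at t"
    by (rule at_within_interior) (use assms b in auto)
  ultimately show ?thesis by simp
qed

lemma J_at0: "J n 0 = 0" by (simp add: J_def)

lemma Lpow_deriv:
  assumes t: "t > -1"
  shows "((\<lambda>x. ln (1 + x) ^ Suc n / fact (Suc n)) has_real_derivative (ln (1 + t) ^ n / fact n / (1 + t))) (at t)"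
proof -
  have "((\<lambda>x. ln (1 + x)) has_real_derivative 1 / (1 + t)) (at t)"
    using t by (auto intro!: derivative_eq_intros)
  from DERIV_cdivide[OF DERIV_power[OF this, of "Suc n"], of "fact (Suc n)"]
  have d: "((\<lambda>x. ln (1 + x) ^ Suc n / fact (Suc n)) has_real_derivative
        (real (Suc n) * (1 / (1 + t) * ln (1 + t) ^ (Suc n - Suc 0)) / fact (Suc n))) (at t)" .
  have e: "real (Suc n) * (1 / (1 + t) * ln (1 + t) ^ (Suc n - Suc 0)) / fact (Suc n) = ln (1 + t) ^ n / fact n / (1 + t)"
    by (simp add: fact_Suc)
  show ?thesis using d unfolding e .
qed

lemma ser_a:
  assumes x: "0 \<le> x" "x < 1"
  shows "ser (-1) (replicate k 1) x = (-1) ^ Suc k * (ln (1 + x) ^ Suc k / fact (Suc k))"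
  using x
proof (induction k arbitrary: x)
  case 0
  show ?case
  proof (rule uniq0[OF 0(1,2)])
    show "ser (-1) (replicate 0 1) 0 = (-1) ^ Suc 0 * (ln (1 + 0) ^ Suc 0 / fact (Suc 0))" by (simp add: ser_at0)
    show "continuous_on {0..x} (ser (-1) (replicate 0 1))" by (rule ser_cont) (use 0 in auto)
    show "continuous_on {0..x} (\<lambda>x. (-1) ^ Suc 0 * (ln (1 + x) ^ Suc 0 / fact (Suc 0)))"
      using 0 by (intro continuous_intros) auto
    fix t :: real assume t: "0 < t" "t < 1"
    show "(ser (-1) (replicate 0 1) has_real_derivative (-1 / (1 + t))) (at t)"
      using ser_deriv_nil[of "-1" t] t by simp
    show "((\<lambda>x. (-1) ^ Suc 0 * (ln (1 + x) ^ Suc 0 / fact (Suc 0))) has_real_derivative (-1 / (1 + t))) (at t)"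
      using t by (auto intro!: derivative_eq_intros)
  qed
next
  case (Suc k)
  show ?case
  proof (rule uniq0[OF Suc(2,3)])
    show "ser (-1) (replicate (Suc k) 1) 0 = (-1) ^ Suc (Suc k) * (ln (1 + 0) ^ Suc (Suc k) / fact (Suc (Suc k)))" by (simp add: ser_at0)
    show "continuous_on {0..x} (ser (-1) (replicate (Suc k) 1))" by (rule ser_cont) (use Suc in auto)
    show "continuous_on {0..x} (\<lambda>x. (-1) ^ Suc (Suc k) * (ln (1 + x) ^ Suc (Suc k) / fact (Suc (Suc k))))"
      using Suc by (intro continuous_intros) auto
    fix t :: real assume t: "0 < t" "t < 1"
    have "(ser (-1) (1 # replicate k 1) has_real_derivative
           (real_of_int (-1) / (1 - real_of_int (-1) * t) * ser ((-1)*1) (replicate k 1) t)) (at t)"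
      by (rule ser_deriv_cons) (use t in auto)
    then show "(ser (-1) (replicate (Suc k) 1) has_real_derivative
           (-1 / (1 + t) * ((-1) ^ Suc k * (ln (1 + t) ^ Suc k / fact (Suc k))))) (at t)"
      using Suc.IH[of t] t by simp
    have "((\<lambda>x. (-1) ^ Suc (Suc k) * (ln (1 + x) ^ Suc (Suc k) / fact (Suc (Suc k)))) has_real_derivative
           ((-1) ^ Suc (Suc k) * (ln (1 + t) ^ Suc k / fact (Suc k) / (1 + t)))) (at t)"
      using t by (intro DERIV_cmult Lpow_deriv) simp
    then show "((\<lambda>x. (-1) ^ Suc (Suc k) * (ln (1 + x) ^ Suc (Suc k) / fact (Suc (Suc k)))) has_real_derivative
           (-1 / (1 + t) * ((-1) ^ Suc k * (ln (1 + t) ^ Suc k / fact (Suc k))))) (at t)"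
      by (rule deriv_eqI) (simp add: field_simps)
  qed
qed


lemma dLpow:
  assumes t: "0 < t" "t < 1"
  shows "((\<lambda>x. ln (1 + x) ^ Suc k * ln (1 - x)) has_real_derivative
     (real (Suc k) * (1 / (1 + t) * ln (1 + t) ^ k) * ln (1 - t) + ln (1 + t) ^ Suc k * (-1 / (1 - t)))) (at t)"
proof -
  have a: "((\<lambda>x. ln (1 + x)) has_real_derivative 1 / (1 + t)) (at t)"
    using t by (auto intro!: derivative_eq_intros)
  have b: "((\<lambda>x. ln (1 - x)) has_real_derivative -1 / (1 - t)) (at t)"
    using t by (auto intro!: derivative_eq_intros)
  show ?thesis using DERIV_mult[OF DERIV_power[OF a, of "Suc k"] b] by simp
qed

lemma ser_b:
  assumes x: "0 \<le> x" "x < 1"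
  shows "ser 1 ((-1) # replicate k 1) x =
    (-1) ^ Suc k / fact (Suc k) * (real (Suc k) * J k x - ln (1 + x) ^ Suc k * ln (1 - x))"
proof (rule uniq0[OF x])
  show "ser 1 ((-1) # replicate k 1) 0 =
    (-1) ^ Suc k / fact (Suc k) * (real (Suc k) * J k 0 - ln (1 + 0) ^ Suc k * ln (1 - 0))"
    by (simp add: ser_at0 J_at0)
  show "continuous_on {0..x} (ser 1 ((-1) # replicate k 1))" by (rule ser_cont) (use x in auto)
  show "continuous_on {0..x} (\<lambda>x. (-1) ^ Suc k / fact (Suc k) * (real (Suc k) * J k x - ln (1 + x) ^ Suc k * ln (1 - x)))"
    using x by (intro continuous_intros J_cont) auto
  fix t :: real assume t: "0 < t" "t < 1"
  have "(ser 1 ((-1) # replicate k 1) has_real_derivative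
         (real_of_int 1 / (1 - real_of_int 1 * t) * ser (1*(-1)) (replicate k 1) t)) (at t)"
    by (rule ser_deriv_cons) (use t in auto)
  then show "(ser 1 ((-1) # replicate k 1) has_real_derivative
         (1 / (1 - t) * ((-1) ^ Suc k * (ln (1 + t) ^ Suc k / fact (Suc k))))) (at t)"
    using ser_a[of t k] t by simp
  have "((\<lambda>x. (-1) ^ Suc k / fact (Suc k) * (real (Suc k) * J k x - ln (1 + x) ^ Suc k * ln (1 - x)))
     has_real_derivative ((-1) ^ Suc k / fact (Suc k) * (real (Suc k) * (ln (1 + t) ^ k * ln (1 - t) / (1 + t)) -
        (real (Suc k) * (1 / (1 + t) * ln (1 + t) ^ k) * ln (1 - t) + ln (1 + t) ^ Suc k * (-1 / (1 - t)))))) (at t)"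
    by (intro DERIV_cmult DERIV_diff J_deriv dLpow t)
  then show "((\<lambda>x. (-1) ^ Suc k / fact (Suc k) * (real (Suc k) * J k x - ln (1 + x) ^ Suc k * ln (1 - x)))
     has_real_derivative (1 / (1 - t) * ((-1) ^ Suc k * (ln (1 + t) ^ Suc k / fact (Suc k))))) (at t)"
  proof (rule deriv_eqI)
    have gen: "\<And>c n A B M p q::real. p \<noteq> 0 \<Longrightarrow> q \<noteq> 0 \<Longrightarrow>
        c * (n * (A * B / p) - (n * (1 / p * A) * B + M * (-1 / q))) = 1 / q * (c * M)"
      by (simp add: field_simps)
    have "(-1) ^ Suc k / fact (Suc k) * (real (Suc k) * (ln (1 + t) ^ k * ln (1 - t) / (1 + t)) -
        (real (Suc k) * (1 / (1 + t) * ln (1 + t) ^ k) * ln (1 - t) + ln (1 + t) ^ Suc k * (-1 / (1 - t))))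
        = 1 / (1 - t) * ((-1) ^ Suc k / fact (Suc k) * ln (1 + t) ^ Suc k)"
      by (rule gen) (use t in auto)
    also have "\<dots> = 1 / (1 - t) * ((-1) ^ Suc k * (ln (1 + t) ^ Suc k / fact (Suc k)))"
      by simp
    finally show "(-1) ^ Suc k / fact (Suc k) * (real (Suc k) * (ln (1 + t) ^ k * ln (1 - t) / (1 + t)) -
        (real (Suc k) * (1 / (1 + t) * ln (1 + t) ^ k) * ln (1 - t) + ln (1 + t) ^ Suc k * (-1 / (1 - t))))
        = 1 / (1 - t) * ((-1) ^ Suc k * (ln (1 + t) ^ Suc k / fact (Suc k)))" .
  qed
qed

lemma ser_one_nil:
  assumes x: "0 \<le> x" "x < 1"
  shows "ser 1 [] x = - ln (1 - x)"
proof (rule uniq0[OF x])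
  show "ser 1 [] 0 = - ln (1 - 0)" by (simp add: ser_at0)
  show "continuous_on {0..x} (ser 1 [])" by (rule ser_cont) (use x in auto)
  show "continuous_on {0..x} (\<lambda>x. - ln (1 - x))" using x by (intro continuous_intros) auto
  fix t :: real assume t: "0 < t" "t < 1"
  show "(ser 1 [] has_real_derivative (1 / (1 - t))) (at t)"
    using ser_deriv_nil[of 1 t] t by simp
  show "((\<lambda>x. - ln (1 - x)) has_real_derivative (1 / (1 - t))) (at t)"
    using t by (auto intro!: derivative_eq_intros)
qed

lemma ser_c:
  assumes x: "0 \<le> x" "x < 1"
  shows "ser (-1) [-1] x = J 0 x"
proof (rule uniq0[OF x])
  show "ser (-1) [-1] 0 = J 0 0" by (simp add: ser_at0 J_at0)
  show "continuous_on {0..x} (ser (-1) [-1])" by (rule ser_cont) (use x in auto)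
  show "continuous_on {0..x} (J 0)" using x by (intro J_cont) auto
  fix t :: real assume t: "0 < t" "t < 1"
  have "(ser (-1) [-1] has_real_derivative
         (real_of_int (-1) / (1 - real_of_int (-1) * t) * ser ((-1)*(-1)) [] t)) (at t)"
    by (rule ser_deriv_cons) (use t in auto)
  then show "(ser (-1) [-1] has_real_derivative (ln (1 + t) ^ 0 * ln (1 - t) / (1 + t))) (at t)"
    using ser_one_nil[of t] t by simp
  show "(J 0 has_real_derivative (ln (1 + t) ^ 0 * ln (1 - t) / (1 + t))) (at t)"
    by (rule J_deriv[OF t])
qed


definition Fk :: "nat \<Rightarrow> nat \<Rightarrow> real \<Rightarrow> real" where
  "Fk k j x = ser (-1) (replicate j 1 @ [-1,-1] @ replicate k 1) x"

definition Phi :: "nat \<Rightarrow> nat \<Rightarrow> real \<Rightarrow> real" where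
  "Phi k j x = (if j = 0 then ser 1 ((-1) # replicate k 1) x else Fk k (j - 1) x)"

lemma Fk_deriv:
  assumes t: "0 < t" "t < 1"
  shows "(Fk k j has_real_derivative (-1 / (1 + t) * Phi k j t)) (at t)"
proof (cases j)
  case 0
  have "(ser (-1) ((-1) # ((-1) # replicate k 1)) has_real_derivative
         (real_of_int (-1) / (1 - real_of_int (-1) * t) * ser ((-1)*(-1)) ((-1) # replicate k 1) t)) (at t)"
    by (rule ser_deriv_cons) (use t in auto)
  then show ?thesis using 0 unfolding Fk_def[abs_def] Phi_def by simp
next
  case (Suc i)
  have "(ser (-1) (1 # (replicate i 1 @ [-1,-1] @ replicate k 1)) has_real_derivative
         (real_of_int (-1) / (1 - real_of_int (-1) * t) * ser ((-1)*1) (replicate i 1 @ [-1,-1] @ replicate k 1) t)) (at t)"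
    by (rule ser_deriv_cons) (use t in auto)
  then show ?thesis using Suc unfolding Fk_def[abs_def] Phi_def by simp
qed

lemma Fk_cont: "0 \<le> x \<Longrightarrow> x < 1 \<Longrightarrow> continuous_on {0..x} (Fk k j)"
  unfolding Fk_def[abs_def] by (rule ser_cont) auto

definition dl :: "nat \<Rightarrow> real \<Rightarrow> real" where
  "dl i t = (if i = 0 then 0 else ln (1 + t) ^ (i - 1) / fact (i - 1) / (1 + t))"

lemma dl_deriv:
  assumes t: "t > -1"
  shows "((\<lambda>x. ln (1 + x) ^ i / fact i) has_real_derivative dl i t) (at t)"
proof (cases i)
  case 0 then show ?thesis by (simp add: dl_def)
next
  case (Suc j) then show ?thesis using Lpow_deriv[OF t, of j] by (simp add: dl_def)
qed

lemma alg_d: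
  fixes s Jk B L P Q fm fk mm kk p :: real
  assumes "fm > 0" "fk > 0" "p > 0" "mm \<ge> 0" "kk \<ge> 0"
  shows "s / ((mm + 1) * fm * ((kk + 1) * fk)) *
     ((kk + 1) * ((mm + 1) * (1 / p * P)) * Jk + Q * B / p * ((kk + 1) * (L * P)) -
      (mm + kk + 2) * (P * L * Q * B / p)) =
     - (P / fm * (- s / ((kk + 1) * fk) * ((kk + 1) * Jk - L * Q * B)) / p)"
proof -
  have "kk + 1 > 0" "mm + 1 > 0" using assms by auto
  then show ?thesis using assms by (simp add: divide_simps) (simp add: algebra_simps)
qed

lemma ser_d:
  assumes x: "0 \<le> x" "x < 1"
  shows "(\<Sum>i<Suc m. ln (1 + x) ^ i / fact i * Fk k (m - i) x) =
    (-1) ^ k / (fact (Suc m) * fact (Suc k)) *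
      (real (Suc k) * ln (1 + x) ^ Suc m * J k x - real (m + k + 2) * J (m + k + 1) x)"
proof (rule uniq0[OF x])
  show "(\<Sum>i<Suc m. ln (1 + 0) ^ i / fact i * Fk k (m - i) 0) =
    (-1) ^ k / (fact (Suc m) * fact (Suc k)) *
      (real (Suc k) * ln (1 + 0) ^ Suc m * J k 0 - real (m + k + 2) * J (m + k + 1) 0)"
    by (simp add: J_at0 Fk_def ser_at0)
  show "continuous_on {0..x} (\<lambda>x. \<Sum>i<Suc m. ln (1 + x) ^ i / fact i * Fk k (m - i) x)"
    using x by (intro continuous_intros Fk_cont) auto
  show "continuous_on {0..x} (\<lambda>x. (-1) ^ k / (fact (Suc m) * fact (Suc k)) *
      (real (Suc k) * ln (1 + x) ^ Suc m * J k x - real (m + k + 2) * J (m + k + 1) x))"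
    using x by (intro continuous_intros J_cont) auto
  fix t :: real assume t: "0 < t" "t < 1"
  define A where "A i = (if i = 0 then 0 else ln (1 + t) ^ (i - 1) / fact (i - 1) * Phi k (Suc m - i) t) / (1 + t)" for i
  have "((\<lambda>x. \<Sum>i<Suc m. ln (1 + x) ^ i / fact i * Fk k (m - i) x) has_real_derivative
     (\<Sum>i<Suc m. dl i t * Fk k (m - i) t + (-1 / (1 + t) * Phi k (m - i) t) * (ln (1 + t) ^ i / fact i))) (at t)"
    by (intro DERIV_sum DERIV_mult dl_deriv Fk_deriv t) (use t in auto)
  moreover have "(\<Sum>i<Suc m. dl i t * Fk k (m - i) t + (-1 / (1 + t) * Phi k (m - i) t) * (ln (1 + t) ^ i / fact i))
     = (\<Sum>i<Suc m. A i - A (Suc i))"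
  proof (rule sum.cong[OF refl])
    fix i assume i: "i \<in> {..<Suc m}"
    have "dl i t * Fk k (m - i) t = A i"
    proof (cases i)
      case 0 then show ?thesis by (simp add: dl_def A_def)
    next
      case (Suc j)
      then have "Suc m - i = Suc (m - i)" using i by auto
      then show ?thesis using Suc by (simp add: dl_def A_def Phi_def)
    qed
    moreover have "(-1 / (1 + t) * Phi k (m - i) t) * (ln (1 + t) ^ i / fact i) = - A (Suc i)"
      by (simp add: A_def mult.commute)
    ultimately show "dl i t * Fk k (m - i) t + (-1 / (1 + t) * Phi k (m - i) t) * (ln (1 + t) ^ i / fact i) = A i - A (Suc i)"
      by simp
  qed
  moreover have "(\<Sum>i<Suc m. A i - A (Suc i)) = - (ln (1 + t) ^ m / fact m * Phi k 0 t / (1 + t))"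
    by (subst sum_lessThan_telescope') (simp add: A_def)
  ultimately have dG: "((\<lambda>x. \<Sum>i<Suc m. ln (1 + x) ^ i / fact i * Fk k (m - i) x) has_real_derivative
     - (ln (1 + t) ^ m / fact m * Phi k 0 t / (1 + t))) (at t)" by simp
  then show "((\<lambda>x. \<Sum>i<Suc m. ln (1 + x) ^ i / fact i * Fk k (m - i) x) has_real_derivative
     - (ln (1 + t) ^ m / fact m * Phi k 0 t / (1 + t))) (at t)" .
  have Phi0: "Phi k 0 t = - ((-1) ^ k) / ((real k + 1) * fact k) * ((real k + 1) * J k t - ln (1 + t) * ln (1 + t) ^ k * ln (1 - t))"
    using ser_b[of t k] t by (simp add: Phi_def fact_Suc add.commute)
  have e1: "fact (Suc k) = (real k + 1) * fact k" "fact (Suc m) = (real m + 1) * fact m"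
    by (simp_all add: fact_Suc)
  have e3: "real (Suc k) = real k + 1" "real (Suc m) = real m + 1" "real (m + k + 2) = real m + real k + 2"
    by simp_all
  have e5: "ln (1 + t) ^ (Suc m - Suc 0) = ln (1 + t) ^ m" "ln (1 + t) ^ Suc m = ln (1 + t) * ln (1 + t) ^ m"
    "ln (1 + t) ^ (m + k + 1) = ln (1 + t) ^ m * ln (1 + t) * ln (1 + t) ^ k"
    by (simp_all add: power_add)
  have a: "((\<lambda>x. ln (1 + x)) has_real_derivative 1 / (1 + t)) (at t)"
    using t by (auto intro!: derivative_eq_intros)
  show "((\<lambda>x. (-1) ^ k / (fact (Suc m) * fact (Suc k)) *
      (real (Suc k) * ln (1 + x) ^ Suc m * J k x - real (m + k + 2) * J (m + k + 1) x)) has_real_derivative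
     - (ln (1 + t) ^ m / fact m * Phi k 0 t / (1 + t))) (at t)"
  apply (rule deriv_eqI[OF DERIV_cmult[OF DERIV_diff[OF DERIV_mult[OF DERIV_cmult[OF DERIV_power[OF a]] J_deriv[OF t]] DERIV_cmult[OF J_deriv[OF t]]]]])
    apply (unfold Phi0 e1 e3 e5)
    apply (rule alg_d)
    using t by auto
qed

lemma xlnx_cont: "continuous_on {0..1} (\<lambda>x::real. (1 - x) * ln (1 - x))"
proof (rule continuous_on_IccI)
  show "((\<lambda>x::real. (1 - x) * ln (1 - x)) \<longlongrightarrow> (1 - 0) * ln (1 - 0)) (at_right 0)"
    by real_asymp
  show "((\<lambda>x::real. (1 - x) * ln (1 - x)) \<longlongrightarrow> (1 - 1) * ln (1 - 1)) (at_left 1)"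
    by real_asymp
  fix x :: real assume "0 < x" "x < 1"
  then show "((\<lambda>x::real. (1 - x) * ln (1 - x)) \<longlongrightarrow> (1 - x) * ln (1 - x)) (at x)"
    by (intro tendsto_intros) auto
qed simp

lemma ln1m_integral: "((\<lambda>x::real. ln (1 - x)) has_integral (-1)) {0..1}"
proof -
  define G where "G x = - ((1 - x) * ln (1 - x)) - x" for x :: real
  have "((\<lambda>x::real. ln (1 - x)) has_integral (G 1 - G 0)) {0..1}"
  proof (rule fundamental_theorem_of_calculus_interior)
    show "continuous_on {0..1} G" unfolding G_def by (intro continuous_intros xlnx_cont)
    fix x :: real assume "x \<in> {0<..<1}"
    then have x: "0 < x" "x < 1" by auto
    show "(G has_vector_derivative ln (1 - x)) (at x)"
      unfolding G_def has_real_derivative_iff_has_vector_derivative[symmetric]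
      using x by (auto intro!: derivative_eq_intros simp: divide_simps)
  qed simp
  then show ?thesis by (simp add: G_def)
qed

lemma integrand_int: "(\<lambda>x::real. ln (1 + x) ^ n * ln (1 - x) / (1 + x)) integrable_on {0..1}"
proof -
  have g: "(\<lambda>x::real. ln (1 - x)) absolutely_integrable_on {0..1}"
  proof -
    have i1: "(\<lambda>x::real. ln (1 - x)) integrable_on {0..1}" using ln1m_integral by blast
    have "(\<lambda>x::real. - ln (1 - x)) integrable_on {0..1}" using integrable_neg[OF i1] by simp
    then have i2: "(\<lambda>x::real. norm (ln (1 - x))) integrable_on {0..1}"
      by (rule integrable_eq) (auto simp: ln_le_zero_iff less_eq_real_def)
    show ?thesis unfolding absolutely_integrable_on_def using i1 i2 by blast
  qed
  have f: "continuous_on {0..1} (\<lambda>x::real. ln (1 + x) ^ n / (1 + x))"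
    by (intro continuous_intros) auto
  have "(\<lambda>x::real. ln (1 + x) ^ n / (1 + x) * ln (1 - x)) absolutely_integrable_on {0..1}"
  proof (rule absolutely_integrable_bounded_measurable_product_real)
    show "(\<lambda>x::real. ln (1 + x) ^ n / (1 + x)) \<in> borel_measurable (lebesgue_on {0..1})"
      by (rule continuous_imp_measurable_on_sets_lebesgue[OF f]) simp
    show "bounded ((\<lambda>x::real. ln (1 + x) ^ n / (1 + x)) ` {0..1})"
      by (rule compact_imp_bounded, rule compact_continuous_image[OF f]) simp
  qed (use g in simp_all)
  then have "(\<lambda>x::real. ln (1 + x) ^ n / (1 + x) * ln (1 - x)) integrable_on {0..1}"
    by (simp add: absolutely_integrable_on_def)
  moreover have "(\<lambda>x::real. ln (1 + x) ^ n / (1 + x) * ln (1 - x)) = (\<lambda>x. ln (1 + x) ^ n * ln (1 - x) / (1 + x))"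
    by (simp add: field_simps)
  ultimately show ?thesis by simp
qed

lemma J_lim: "(J n \<longlongrightarrow> J n 1) (at_left 1)"
proof -
  have "continuous_on {0..1} (J n)"
    unfolding J_def[abs_def] by (rule indefinite_integral_continuous_1[OF integrand_int])
  then show ?thesis by (rule continuous_on_Icc_at_leftD) simp
qed


lemma mzv_abel:
  assumes r: "set r \<subseteq> {1,-1}"
  shows "(ser (-1) r \<longlongrightarrow> mzv ((-1) # r)) (at_left 1)"
proof -
  obtain A where A: "(\<lambda>N. \<Sum>n<N. cf (-1) r n) \<longlonglongrightarrow> A"
    using trunc_conv[OF r] unfolding convergent_def by blast
  have "(\<lambda>N. mzv_trunc ((-1) # r) N) \<longlonglongrightarrow> A"
    unfolding trunc_cf using LIMSEQ_Suc[OF A] .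
  then have "mzv ((-1) # r) = A" unfolding mzv_def by (rule limI)
  moreover have "(ser (-1) r \<longlongrightarrow> A) (at_left 1)"
    unfolding ser_def[abs_def] by (rule abel_thm[OF A])
  ultimately show ?thesis by simp
qed

lemma trunc_mm: "mzv_trunc [-1,-1] N =
   ((\<Sum>n\<in>{1..N}. (-1) ^ n / real n) ^ 2 - (\<Sum>n\<in>{1..N}. 1 / real n ^ 2)) / 2"
proof (induction N)
  case 0 then show ?case by simp
next
  case (Suc N)
  have t1: "mzv_trunc [-1] M = (\<Sum>n\<in>{1..M}. (-1) ^ n / real n)" for M by simp
  have "mzv_trunc [-1,-1] (Suc N) = mzv_trunc [-1,-1] N + (-1) ^ Suc N / real (Suc N) * mzv_trunc [-1] N"
    by simp
  also have "\<dots> = mzv_trunc [-1,-1] N + (-1) ^ Suc N / real (Suc N) * (\<Sum>n\<in>{1..N}. (-1) ^ n / real n)"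
    unfolding t1 ..
  also have "\<dots> = ((\<Sum>n\<in>{1..Suc N}. (-1) ^ n / real n) ^ 2 - (\<Sum>n\<in>{1..Suc N}. 1 / real n ^ 2)) / 2"
  proof -
    have gen: "\<And>S Q a b::real. a ^ 2 = b \<Longrightarrow> ((S + a) ^ 2 - (Q + b)) / 2 = (S ^ 2 - Q) / 2 + a * S"
      by (simp add: power2_eq_square field_simps)
    have sq: "((-1) ^ Suc N / real (Suc N)) ^ 2 = 1 / real (Suc N) ^ 2"
      by (simp add: power_divide power_mult_distrib[symmetric] power_mult[symmetric] mult.commute[of _ 2])
    have "((\<Sum>n\<in>{1..Suc N}. (-1) ^ n / real n) ^ 2 - (\<Sum>n\<in>{1..Suc N}. 1 / real n ^ 2)) / 2
       = (((\<Sum>n\<in>{1..N}. (-1) ^ n / real n) + (-1) ^ Suc N / real (Suc N)) ^ 2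
          - ((\<Sum>n\<in>{1..N}. 1 / real n ^ 2) + 1 / real (Suc N) ^ 2)) / 2"
      by simp
    also have "\<dots> = mzv_trunc [-1,-1] N + (-1) ^ Suc N / real (Suc N) * (\<Sum>n\<in>{1..N}. (-1) ^ n / real n)"
      unfolding Suc by (rule gen[OF sq])
    finally show ?thesis by simp
  qed
  finally show ?case .
qed


lemma mzv_mm: "mzv [-1,-1] = (ln 2 ^ 2 - zeta2) / 2"
proof -
  have A: "(\<lambda>N. \<Sum>n\<in>{1..N}. (-1) ^ n / real n) \<longlonglongrightarrow> - ln 2"
  proof -
    have "(\<lambda>N. \<Sum>k<N. (-1) ^ k / real_of_nat (Suc k)) \<longlonglongrightarrow> ln 2"
      using alternating_harmonic_series_sums unfolding sums_def .
    then have "(\<lambda>N. - (\<Sum>k<N. (-1) ^ k / real_of_nat (Suc k))) \<longlonglongrightarrow> - ln 2"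
      by (rule tendsto_minus)
    moreover have "(\<Sum>n\<in>{1..N}. (-1) ^ n / real n) = - (\<Sum>k<N. (-1) ^ k / real_of_nat (Suc k))" for N
      by (simp add: sum.atLeast1_atMost_eq sum_negf)
    ultimately show ?thesis by simp
  qed
  have B: "(\<lambda>N. \<Sum>n\<in>{1..N}. 1 / real n ^ 2) \<longlonglongrightarrow> zeta2"
  proof -
    have "summable (\<lambda>n. inverse (real n ^ 2))" by (rule inverse_power_summable) simp
    then have "summable (\<lambda>n. 1 / real (Suc n) ^ 2)"
      by (subst (asm) summable_Suc_iff[symmetric]) (simp add: divide_inverse)
    then have "(\<lambda>n. 1 / real (Suc n) ^ 2) sums zeta2" unfolding zeta2_def by (rule summable_sums)
    then have "(\<lambda>N. \<Sum>k<N. 1 / real (Suc k) ^ 2) \<longlonglongrightarrow> zeta2" unfolding sums_def .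
    moreover have "(\<Sum>n\<in>{1..N}. 1 / real n ^ 2) = (\<Sum>k<N. 1 / real (Suc k) ^ 2)" for N
      by (simp add: sum.atLeast1_atMost_eq)
    ultimately show ?thesis by simp
  qed
  have "(\<lambda>N. mzv_trunc [-1,-1] N) \<longlonglongrightarrow> ((- ln 2) ^ 2 - zeta2) / 2"
    unfolding trunc_mm by (intro tendsto_intros A B) simp
  then have "mzv [-1,-1] = ((- ln 2) ^ 2 - zeta2) / 2" unfolding mzv_def by (rule limI)
  then show ?thesis by simp
qed

lemma J01: "J 0 1 = (ln 2 ^ 2 - zeta2) / 2"
proof -
  have "(ser (-1) [-1] \<longlongrightarrow> mzv ((-1) # [-1])) (at_left 1)" by (rule mzv_abel) simp
  moreover have "eventually (\<lambda>x. ser (-1) [-1] x = J 0 x) (at_left (1::real))"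
    using eventually_at_left_real[of 0 "1::real"] by (rule eventually_mono) (auto intro: ser_c)
  ultimately have "(J 0 \<longlongrightarrow> mzv [-1,-1]) (at_left 1)"
    by (simp add: Lim_transform_eventually)
  then have "J 0 1 = mzv [-1,-1]" using J_lim[of 0] by (intro tendsto_unique) auto
  then show ?thesis using mzv_mm by simp
qed

lemma J_Iint: "J n 1 = Iint n"
  using J01 by (simp add: Iint_def J_def)

theorem theorem3p5:
  fixes m k :: nat
  shows "mzv ([-1] @ replicate m 1 @ [-1, -1] @ replicate k 1) =
    (-1) ^ k / (fact (m + 1) * fact (k + 1)) *
      (real (k + 1) * ln 2 ^ (m + 1) * Iint k - real (m + k + 2) * Iint (m + k + 1))
    - (\<Sum>i = 1..m. ln 2 ^ i / fact i * mzv ([-1] @ replicate (m - i) 1 @ [-1, -1] @ replicate k 1))"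
proof -
  define Z where "Z j = mzv ([-1] @ replicate j 1 @ [-1, -1] @ replicate k 1)" for j
  have FZ: "(Fk k j \<longlongrightarrow> Z j) (at_left 1)" for j
    unfolding Fk_def[abs_def] Z_def by (simp, intro mzv_abel) auto
  have L2: "((\<lambda>x::real. ln (1 + x)) \<longlongrightarrow> ln 2) (at_left 1)"
  proof -
    have "((\<lambda>x::real. ln (1 + x)) \<longlongrightarrow> ln (1 + 1)) (at_left 1)" by (intro tendsto_intros) auto
    then show ?thesis by simp
  qed
  have l1: "((\<lambda>x. \<Sum>i<Suc m. ln (1 + x) ^ i / fact i * Fk k (m - i) x) \<longlongrightarrow>
      (\<Sum>i<Suc m. ln 2 ^ i / fact i * Z (m - i))) (at_left 1)"
    by (intro tendsto_sum tendsto_mult tendsto_divide tendsto_power L2 FZ tendsto_const) auto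
  have l2: "((\<lambda>x. (-1) ^ k / (fact (Suc m) * fact (Suc k)) *
      (real (Suc k) * ln (1 + x) ^ Suc m * J k x - real (m + k + 2) * J (m + k + 1) x)) \<longlongrightarrow>
      (-1) ^ k / (fact (Suc m) * fact (Suc k)) *
      (real (Suc k) * ln 2 ^ Suc m * J k 1 - real (m + k + 2) * J (m + k + 1) 1)) (at_left 1)"
    by (intro tendsto_mult tendsto_diff tendsto_power L2 J_lim tendsto_const)
  have ev: "eventually (\<lambda>x. (\<Sum>i<Suc m. ln (1 + x) ^ i / fact i * Fk k (m - i) x) =
      (-1) ^ k / (fact (Suc m) * fact (Suc k)) *
      (real (Suc k) * ln (1 + x) ^ Suc m * J k x - real (m + k + 2) * J (m + k + 1) x)) (at_left (1::real))"
    apply (rule eventually_mono[OF eventually_at_left_real[of 0 "1::real"]])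
     apply simp
    apply (rule ser_d)
    by auto
  have "(\<Sum>i<Suc m. ln 2 ^ i / fact i * Z (m - i)) =
      (-1) ^ k / (fact (Suc m) * fact (Suc k)) *
      (real (Suc k) * ln 2 ^ Suc m * J k 1 - real (m + k + 2) * J (m + k + 1) 1)"
    using Lim_transform_eventually[OF l1 ev] l2 by (intro tendsto_unique) auto
  moreover have "(\<Sum>i<Suc m. ln 2 ^ i / fact i * Z (m - i)) =
      Z m + (\<Sum>i = 1..m. ln 2 ^ i / fact i * Z (m - i))"
    by (simp add: sum.lessThan_Suc_shift sum.atLeast1_atMost_eq del: sum.lessThan_Suc)
  ultimately show ?thesis unfolding Z_def J_Iint by simp
qed

end
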